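(* Let $k\ge2$ and $G=\mathrm{BS}(1,k)\cong\mathbb Z[\tfrac1k]\rtimes_\varphi\langle t\rangle$ with $\varphi(x)=kx$. Let $n\in\mathbb Z$ and let $A=\{(a_1,t^n),\dots,(a_r,t^n)\}\subseteq G$ be a finite set of $r$ distinct elements all with $t$-exponent sum $n$. Then there exist integers $N_1,N_2\ge0$ and a positive integer $L$ such that, with $g=t^{N_1}\,(L,1)\,t^{N_2}\in G$, the $r$ elements of $gA$ lie in pairwise distinct conjugacy classes of $G$, i.e. $c(gA)=|A|$.
   Context: Elements of $G$ are pairs $(x,t^m)$, $x\in\mathbb Z[1/k]$, with $(x,t^m)(x',t^{m'})=(x+k^mx',t^{m+m'})$; $t^m$ denotes $(0,t^m)$ and the $t$-exponent sum of $(x,t^m)$ is $m$. For $B\subseteq G$, $c(B)$ is the number of distinct conjugacy classes meeting $B$. *)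

theory Defs
  imports Complex_Main
begin

text \<open>The Baumslag--Solitar group BS(1,k) = Z[1/k] \<rtimes> <t>, elements (x, m) meaning (x, t^m).\<close>

definition Zk :: "int \<Rightarrow> rat set" where
  "Zk k = {x. \<exists>a::int. \<exists>j::nat. x = of_int a / (of_int k) ^ j}"

definition bs_carrier :: "int \<Rightarrow> (rat \<times> int) set" where
  "bs_carrier k = Zk k \<times> UNIV"

definition bs_mult :: "int \<Rightarrow> rat \<times> int \<Rightarrow> rat \<times> int \<Rightarrow> rat \<times> int" where
  "bs_mult k p q = (fst p + (of_int k) powi (snd p) * fst q, snd p + snd q)"

definition bs_inv :: "int \<Rightarrow> rat \<times> int \<Rightarrow> rat \<times> int" where
  "bs_inv k p = (- ((of_int k) powi (- snd p)) * fst p, - snd p)"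

definition bs_t :: "int \<Rightarrow> rat \<times> int" where
  "bs_t m = (0, m)"

definition bs_conj :: "int \<Rightarrow> rat \<times> int \<Rightarrow> rat \<times> int \<Rightarrow> bool" where
  "bs_conj k h h' \<longleftrightarrow> (\<exists>g \<in> bs_carrier k. bs_mult k (bs_mult k g h) (bs_inv k g) = h')"

definition bs_conjclass :: "int \<Rightarrow> rat \<times> int \<Rightarrow> (rat \<times> int) set" where
  "bs_conjclass k h = {h' \<in> bs_carrier k. bs_conj k h h'}"

definition bs_c :: "int \<Rightarrow> (rat \<times> int) set \<Rightarrow> nat" where
  "bs_c k B = card (bs_conjclass k ` B)"

end

theory Submission
  imports Defs "HOL-Number_Theory.Cong"
begin


lemma no_rot:
  fixes k c c' lo hi :: int and r M m0 :: nat
  assumes k: "k \<ge> 2" and r: "1 \<le> r" "2*r \<le> M"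
    and c: "lo \<le> c" "c \<le> hi" "lo \<le> c'" "c' \<le> hi"
    and lo: "1 \<le> lo" "hi < k*lo" and m0: "hi < k^m0" "2*m0+2 \<le> M"
    and d: "(k^M - 1) dvd (k^r*c - c')"
  shows False
proof -
  have "k \<le> k^r" using k r by (intro self_le_power) auto
  hence "k*lo \<le> k^r*c" using c lo k by (intro mult_mono) auto
  hence pos: "0 < k^r*c - c'" using lo c by linarith
  have "k^r*c \<le> k^r*hi" using c k by simp
  also have "\<dots> < k^r * k^m0" using m0 k by simp
  also have "\<dots> = k^(r+m0)" by (simp add: power_add)
  also have "\<dots> \<le> k^(M-1)" using k r m0 by (intro power_increasing) auto
  also have "\<dots> \<le> k^M - 1"
  proof -
    have "M = Suc (M-1)" using m0 by simp
    hence e: "k^M = k * k^(M-1)" by (metis power_Suc)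
    have "k*k^(M-1) \<ge> 2*k^(M-1)" using k by (intro mult_right_mono) auto
    moreover have "k^(M-1) \<ge> 1" using k by simp
    ultimately show ?thesis using e by linarith
  qed
  finally have "k^r*c - c' < k^M - 1" using c lo by linarith
  with zdvd_imp_le[OF d pos] show False by linarith
qed

lemma coprime_k_D: "coprime (k::int) (k^M - 1)" if "M \<ge> 1"
proof -
  have "coprime (k^M) (k^M - 1)" by simp
  thus ?thesis using that coprime_power_left_iff[of k M "k^M-1"] by auto
qed

lemma key_ord:
  fixes k c c' lo hi :: int and u v M m0 :: nat
  assumes k: "k \<ge> 2"
    and c: "lo \<le> c" "c \<le> hi" "lo \<le> c'" "c' \<le> hi"
    and lo: "1 \<le> lo" "hi < k*lo" and m0: "hi < k^m0" "2*m0+2 \<le> M"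
    and uv: "v \<le> u"
    and cg: "[k^u*c = k^v*c'] (mod (k^M - 1))"
  shows "c = c'"
proof -
  define D where "D = k^M - 1"
  have M1: "M \<ge> 1" using m0 by simp
  have cop: "coprime (k^v) D" unfolding D_def using coprime_k_D[OF M1, of k] by simp
  have "k^v * k^(u-v) = k^u" using uv by (simp add: power_add[symmetric])
  hence "k^u*c = k^v*(k^(u-v)*c)" by (simp add: mult.assoc[symmetric])
  with cg have "[k^v*(k^(u-v)*c) = k^v*c'] (mod D)" unfolding D_def by simp
  hence c1: "[k^(u-v)*c = c'] (mod D)" using cong_mult_lcancel[OF cop] by simp
  define t where "t = u - v"
  define r where "r = t mod M"
  have kM: "[k^M = 1] (mod D)" unfolding D_def by (simp add: cong_iff_dvd_diff)
  have "[(k^M)^(t div M) = 1^(t div M)] (mod D)" by (rule cong_pow[OF kM])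
  hence "[(k^M)^(t div M) * k^r = 1 * k^r] (mod D)" by (intro cong_scalar_right) simp
  moreover have "(k^M)^(t div M) * k^r = k^t"
  proof -
    have "t = M*(t div M) + r" unfolding r_def by simp
    hence "k^t = k^(M*(t div M) + r)" by simp
    also have "\<dots> = (k^M)^(t div M) * k^r" by (simp add: power_add power_mult)
    finally show ?thesis by simp
  qed
  ultimately have "[k^t = k^r] (mod D)" by simp
  hence "[k^t*c = k^r*c] (mod D)" by (rule cong_scalar_right)
  hence c2: "[k^r*c = c'] (mod D)" using cong_trans[OF cong_sym c1[folded t_def]] by blast
  have rM: "r < M" unfolding r_def using M1 by simp
  have Dbig: "hi < D"
  proof -
    have "hi < k^m0" by (rule m0)
    also have "\<dots> \<le> k^(M-1)" using k m0 by (intro power_increasing) auto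
    also have "\<dots> \<le> k^M - 1"
    proof -
      have "M = Suc (M-1)" using m0 by simp
      hence e: "k^M = k * k^(M-1)" by (metis power_Suc)
      have "k*k^(M-1) \<ge> 2*k^(M-1)" using k by (intro mult_right_mono) auto
      moreover have "k^(M-1) \<ge> 1" using k by simp
      ultimately show ?thesis using e by linarith
    qed
    finally show ?thesis unfolding D_def .
  qed
  consider "r = 0" | "r \<ge> 1" "2*r \<le> M" | "2*r > M" by linarith
  then show ?thesis
  proof cases
    case 1
    hence "D dvd c - c'" using c2 by (simp add: cong_iff_dvd_diff)
    moreover have "\<bar>c - c'\<bar> < D" using c lo Dbig by linarith
    ultimately show ?thesis using dvd_imp_le_int[of "c - c'" D] Dbig lo c by fastforce
  next
    case 2
    hence "D dvd k^r*c - c'" using c2 by (simp add: cong_iff_dvd_diff)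
    then show ?thesis using no_rot[OF k 2 c lo m0] unfolding D_def by blast
  next
    case 3
    have X: "[k^(M-r) * (k^r*c) = k^(M-r)*c'] (mod D)" using c2 by (rule cong_scalar_left)
    have eq:  "k^(M-r) * (k^r*c) = k^M * c"
    proof -
      have "k^(M-r) * k^r = k^M" using rM by (simp add: power_add[symmetric])
      thus ?thesis by (simp add: mult.assoc[symmetric])
    qed
    have Y: "[k^M * c = 1 * c] (mod D)" using kM by (rule cong_scalar_right)
    have "[k^(M-r)*c' = 1 * c] (mod D)" using cong_trans[OF cong_sym[OF X[unfolded eq]] Y] .
    hence "[k^(M-r)*c' = c] (mod D)" by simp
    hence "D dvd k^(M-r)*c' - c" by (simp add: cong_iff_dvd_diff)
    moreover have "1 \<le> M - r" "2*(M-r) \<le> M" using 3 rM by auto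
    ultimately show ?thesis using no_rot[OF k _ _ c(3,4,1,2) lo m0] unfolding D_def by blast
  qed
qed



lemma key:
  fixes k c c' lo hi :: int and u v M m0 :: nat
  assumes k: "k \<ge> 2"
    and c: "lo \<le> c" "c \<le> hi" "lo \<le> c'" "c' \<le> hi"
    and lo: "1 \<le> lo" "hi < k*lo" and m0: "hi < k^m0" "2*m0+2 \<le> M"
    and cg: "[k^u*c = k^v*c'] (mod (k^M - 1))"
  shows "c = c'"
proof (cases "v \<le> u")
  case True
  show ?thesis by (rule key_ord[OF k c lo m0 True cg])
next
  case False
  hence "u \<le> v" by simp
  from key_ord[OF k c(3,4,1,2) lo m0 this cong_sym[OF cg]] show ?thesis by simp
qed

lemma conj_to_int:
  fixes k a c c' s :: int and j N1 M :: nat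
  assumes k: "k \<ge> 2"
    and eq: "(of_int k::rat) powi s * ((of_int k)^N1 * of_int c) + (of_int a / (of_int k)^j) * (1 - (of_int k)^M)
             = (of_int k)^N1 * of_int c'"
  shows "\<exists>u v. [k^u*c = k^v*c'] (mod (k^M - 1))"
proof -
  define K where "K = (of_int k :: rat)"
  have K0: "K \<noteq> 0" unfolding K_def using k by simp
  define w where "w = nat \<bar>s\<bar>"
  define E where "E = j + w"
  have e1: "K powi s * K^E = K^nat(s + int E)"
  proof -
    have "K powi s * K^E = K powi s * K powi (int E)" by simp
    also have "\<dots> = K powi (s + int E)" using power_int_add[of K s "int E"] K0 by simp
    also have "s + int E = int (nat (s + int E))" unfolding E_def w_def by simp
    finally show ?thesis by (metis power_int_of_nat)
  qed
  have e2: "(of_int a / K^j) * K^E = of_int a * K^w"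
    unfolding E_def using K0 by (simp add: power_add)
  have "(K powi s * (K^N1 * of_int c) + (of_int a / K^j) * (1 - K^M)) * K^E = K^N1 * of_int c' * K^E"
    using eq unfolding K_def by simp
  hence "(K powi s * K^E) * K^N1 * of_int c + ((of_int a / K^j) * K^E) * (1 - K^M) = K^(N1+E) * of_int c'"
    by (simp add: algebra_simps power_add)
  hence "K^(nat(s + int E) + N1) * of_int c + of_int a * K^w * (1 - K^M) = K^(N1+E) * of_int c'"
    unfolding e1 e2 by (simp add: power_add)
  hence "of_int (k^(nat(s + int E) + N1) * c + a * k^w * (1 - k^M)) = (of_int (k^(N1+E) * c') :: rat)"
    unfolding K_def by simp
  hence "k^(nat(s + int E) + N1) * c + a * k^w * (1 - k^M) = k^(N1+E) * c'"
    using of_int_eq_iff by blast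
  hence "k^(nat(s + int E) + N1) * c - k^(N1+E) * c' = (k^M - 1) * (a * k^w)"
    by (simp add: algebra_simps)
  hence "[k^(nat(s + int E) + N1) * c = k^(N1+E) * c'] (mod (k^M - 1))"
    by (simp add: cong_iff_dvd_diff)
  thus ?thesis by blast
qed

lemma conj_elim:
  assumes "bs_conj k h h'" "k \<noteq> 0"
  shows "\<exists>y s. y \<in> Zk k \<and> snd h' = snd h \<and>
    fst h' = (of_int k) powi s * fst h + y * (1 - (of_int k) powi (snd h))"
proof -
  obtain y s where ys: "(y, s) \<in> bs_carrier k" "bs_mult k (bs_mult k (y,s) h) (bs_inv k (y,s)) = h'"
    using assms unfolding bs_conj_def by auto
  define K where "K = (of_int k :: rat)"
  have K0: "K \<noteq> 0" unfolding K_def using assms by simp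
  have p: "K powi (s + snd h) * K powi (-s) = K powi (snd h)"
    using power_int_add[of K "s + snd h" "-s"] K0 by simp
  have "fst h' = (y + K powi s * fst h) + K powi (s + snd h) * (- (K powi (-s)) * y)"
    using ys(2) unfolding bs_mult_def bs_inv_def K_def by auto
  also have "\<dots> = K powi s * fst h + y * (1 - K powi (snd h))"
    using p by (simp add: algebra_simps)
  finally have "fst h' = K powi s * fst h + y * (1 - K powi (snd h))" .
  moreover have "snd h' = snd h" using ys(2) unfolding bs_mult_def bs_inv_def by auto
  moreover have "y \<in> Zk k" using ys(1) unfolding bs_carrier_def by auto
  ultimately show ?thesis unfolding K_def by blast
qed

lemma denom:
  assumes "finite A" "A \<subseteq> bs_carrier k" "k \<noteq> 0"
  shows "\<exists>N. \<forall>a\<in>A. \<exists>b::int. (of_int k :: rat)^N * fst a = of_int b"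
  using assms
proof (induction A rule: finite_induct)
  case empty
  then show ?case by simp
next
  case (insert x F)
  then obtain N where N: "\<forall>a\<in>F. \<exists>b::int. (of_int k :: rat)^N * fst a = of_int b" by auto
  have "fst x \<in> Zk k" using insert(4) unfolding bs_carrier_def by auto
  then obtain a j where aj: "fst x = of_int a / (of_int k)^j" unfolding Zk_def by auto
  have "\<forall>y\<in>insert x F. \<exists>b::int. (of_int k :: rat)^(N+j) * fst y = of_int b"
  proof
    fix y assume "y \<in> insert x F"
    then consider "y = x" | "y \<in> F" by auto
    then show "\<exists>b::int. (of_int k :: rat)^(N+j) * fst y = of_int b"
    proof cases
      case 1
      have "(of_int k :: rat)^(N+j) * fst y = of_int (k^N * a)"
        using 1 aj insert(5) by (simp add: power_add)
      then show ?thesis by blast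
    next
      case 2
      then obtain b where "(of_int k :: rat)^N * fst y = of_int b" using N by auto
      hence "(of_int k :: rat)^(N+j) * fst y = of_int (k^j * b)"
        by (simp add: power_add algebra_simps)
      then show ?thesis by blast
    qed
  qed
  then show ?case by blast
qed



theorem lemma5p3:
  fixes k n :: int and A :: "(rat \<times> int) set"
  assumes "k \<ge> 2"
    and "finite A"
    and "A \<subseteq> bs_carrier k"
    and "\<forall>a \<in> A. snd a = n"
  shows "\<exists>N1 N2 :: nat. \<exists>L :: int. L > 0 \<and>
           (let g = bs_mult k (bs_mult k (bs_t (int N1)) (of_int L, 0)) (bs_t (int N2))
            in bs_c k (bs_mult k g ` A) = card A)"
proof -
  have k: "k \<ge> 2" by fact
  have k0: "k \<noteq> 0" using k by simp
  define K where "K = (of_int k :: rat)"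
  have K0: "K \<noteq> 0" unfolding K_def using k by simp
  obtain N2 where N2: "\<forall>a\<in>A. \<exists>b::int. K^N2 * fst a = of_int b"
    using denom[OF assms(2,3) k0] unfolding K_def by blast
  define b where "b (a::rat\<times>int) = (SOME b::int. K^N2 * fst a = of_int b)" for a
  have b: "K^N2 * fst a = of_int (b a)" if "a \<in> A" for a
    unfolding b_def using N2 that by (metis (mono_tags) someI_ex)
  define C where "C = (\<Sum>a\<in>A. \<bar>b a\<bar>)"
  have C: "\<bar>b a\<bar> \<le> C" if "a \<in> A" for a
    unfolding C_def using member_le_sum[of a A "\<lambda>a. \<bar>b a\<bar>"] assms(2) that by simp
  have C0: "C \<ge> 0" unfolding C_def by (simp add: sum_nonneg)
  define L where "L = 3*C + 1"
  define lo where "lo = 2*C + 1"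
  define hi where "hi = 4*C + 1"
  define m0 where "m0 = nat hi"
  define N1 where "N1 = 2*m0 + 2 + nat \<bar>n\<bar>"
  define M where "M = nat (int N1 + int N2 + n)"
  have Mi: "int M = int N1 + int N2 + n" unfolding M_def N1_def by simp
  have Mge: "2*m0 + 2 \<le> M" using Mi unfolding N1_def by simp
  have lo1: "1 \<le> lo" unfolding lo_def using C0 by simp
  have lohi: "hi < k*lo"
  proof -
    have "2*lo \<le> k*lo" using k lo1 by (intro mult_right_mono) auto
    thus ?thesis unfolding lo_def hi_def by simp
  qed
  have m0hi: "hi < k^m0"
  proof -
    have "int m0 = hi" unfolding m0_def hi_def using C0 by simp
    have "m0 < 2^m0" by (rule less_exp)
    hence "int m0 < 2^m0" by (metis of_nat_less_iff of_nat_numeral of_nat_power)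
    also have "(2::int)^m0 \<le> k^m0" using k by (intro power_mono) auto
    finally show ?thesis using \<open>int m0 = hi\<close> by simp
  qed
  define c where "c (a::rat\<times>int) = L + b a" for a
  have crange: "lo \<le> c a" "c a \<le> hi" if "a \<in> A" for a
    using C[OF that] unfolding c_def lo_def hi_def L_def by auto
  define g where "g = bs_mult k (bs_mult k (bs_t (int N1)) (of_int L, 0)) (bs_t (int N2))"
  have g: "g = (K^N1 * of_int L, int N1 + int N2)"
    unfolding g_def bs_mult_def bs_t_def K_def by simp
  define f where "f = bs_mult k g"
  have fA: "f a = (K^N1 * of_int (c a), int M)" if "a \<in> A" for a
  proof -
    have "K powi (int N1 + int N2) = K^N1 * K^N2"
      by (metis of_nat_add power_int_of_nat power_add)
    hence "fst (f a) = K^N1 * of_int L + K^N1 * (K^N2 * fst a)"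
      unfolding f_def g bs_mult_def K_def by (simp add: algebra_simps)
    also have "\<dots> = K^N1 * of_int (c a)" using b[OF that] unfolding c_def by (simp add: algebra_simps)
    finally show ?thesis using Mi assms(4) that unfolding f_def g bs_mult_def
      by (simp add: prod_eq_iff)
  qed
  have finj: "inj_on f A"
  proof
    fix p q assume pq: "p \<in> A" "q \<in> A" "f p = f q"
    have "K powi (snd g) * fst p = K powi (snd g) * fst q"
      using pq(3) unfolding f_def bs_mult_def K_def by simp
    hence "fst p = fst q" using K0 by simp
    moreover have "snd p = snd q" using pq assms(4) by simp
    ultimately show "p = q" by (simp add: prod_eq_iff)
  qed
  have carr: "f a \<in> bs_carrier k" if "a \<in> A" for a
  proof -
    have "K^N1 * of_int (c a) = of_int (k^N1 * c a) / of_int k ^ 0" unfolding K_def by simp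
    thus ?thesis unfolding fA[OF that] bs_carrier_def Zk_def K_def by blast
  qed
  have self: "h \<in> bs_conjclass k h" if "h \<in> bs_carrier k" for h
  proof -
    have "(0, 0) \<in> bs_carrier k" unfolding bs_carrier_def Zk_def
      by (auto intro!: exI[of _ 0] exI[of _ "0::nat"])
    moreover have "bs_mult k (bs_mult k (0,0) h) (bs_inv k (0,0)) = h"
      unfolding bs_mult_def bs_inv_def by simp
    ultimately show ?thesis using that unfolding bs_conjclass_def bs_conj_def by blast
  qed
  have cinj: "inj_on (bs_conjclass k) (f ` A)"
  proof
    fix h1 h2 assume h: "h1 \<in> f ` A" "h2 \<in> f ` A" "bs_conjclass k h1 = bs_conjclass k h2"
    then obtain p q where pq: "p \<in> A" "q \<in> A" "h1 = f p" "h2 = f q" by auto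
    have "h2 \<in> bs_conjclass k h1" using h(3) self carr pq by simp
    hence "bs_conj k h1 h2" unfolding bs_conjclass_def by simp
    from conj_elim[OF this k0] obtain y s where ys: "y \<in> Zk k"
      "fst h2 = (of_int k) powi s * fst h1 + y * (1 - (of_int k) powi (snd h1))" by blast
    obtain a j where y: "y = of_int a / (of_int k)^j" using ys(1) unfolding Zk_def by auto
    have "K powi s * (K^N1 * of_int (c p)) + (of_int a / K^j) * (1 - K^M) = K^N1 * of_int (c q)"
      using ys(2) unfolding pq fA[OF pq(1)] fA[OF pq(2)] y K_def by simp
    from conj_to_int[OF k this[unfolded K_def]] obtain u v where
      "[k^u * c p = k^v * c q] (mod (k^M - 1))" by blast
    from key[OF k crange[OF pq(1)] crange[OF pq(2)] lo1 lohi m0hi Mge this]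
    have "c p = c q" .
    hence "b p = b q" unfolding c_def by simp
    hence "K^N2 * fst p = K^N2 * fst q" using b pq by simp
    hence "fst p = fst q" using K0 by simp
    moreover have "snd p = snd q" using pq assms(4) by simp
    ultimately have "p = q" by (simp add: prod_eq_iff)
    thus "h1 = h2" using pq by simp
  qed
  have "bs_c k (f ` A) = card A"
    unfolding bs_c_def using card_image[OF cinj] card_image[OF finj] by simp
  moreover have "L > 0" unfolding L_def using C0 by simp
  ultimately show ?thesis unfolding f_def g_def Let_def by blast
qed

end
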